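(* In $Y_R(\mathfrak{so}_3)$: $$[e_{-1,0}(u),f_{0,-1}(v)]=\frac{k_{-1}^{-1}(u)k_0(u)-k_{-1}^{-1}(v)k_0(v)}{u-v}.$$
   Context: Let $e_{ij}$ ($i,j\in\{-1,0,1\}$) be the matrix units of $\mathrm{End}\,\mathbb{C}^3$, with rows and columns indexed by $-1,0,1$. Let $P=\sum_{i,j}e_{ij}\otimes e_{ji}$, $Q=\sum_{i,j}e_{ij}\otimes e_{-i,-j}$ and $R(u)=1-\frac{P}{u}+\frac{Q}{u-\frac12}$. Let $t$ be the transposition on $\mathrm{End}\,\mathbb{C}^3$ given by $(e_{ij})^t=e_{-j,-i}$. The algebra $Y_R(\mathfrak{so}_3)$ is the unital associative algebra over $\mathbb{C}$ generated by elements $t_{ij}^{(r)}$, $r\ge 1$, $i,j\in\{-1,0,1\}$; put $t_{ij}(u)=\delta_{ij}+\sum_{r\ge1}t^{(r)}_{ij}u^{-r}$, $T(u)=\sum_{i,j}t_{ij}(u)\otimes e_{ij}$, $T^t(u)=\sum_{i,j}t_{ij}(u)\otimes e_{-j,-i}$, $T_1(u)=\sum t_{ij}(u)\otimes e_{ij}\otimes 1$, $T_2(v)=\sum t_{ij}(v)\otimes 1\otimes e_{ij}$. The defining relations are $R(u-v)T_1(u)T_2(v)=T_2(v)T_1(u)R(u-v)$ and $T(u)T^t(u+\frac12)=T^t(u+\frac12)T(u)=1$. The Gauss generators are the unique series $k_i(u)\in 1+u^{-1}Y_R(\mathfrak{so}_3)[[u^{-1}]]$ ($i=-1,0,1$)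 and $e_{ij}(u),f_{ji}(u)\in u^{-1}Y_R(\mathfrak{so}_3)[[u^{-1}]]$ ($-1\le i<j\le1$) such that $T(u)=F(u)K(u)E(u)$, where $F(u)$ is the lower unitriangular matrix with below-diagonal entries $F_{0,-1}=f_{0,-1}(u)$, $F_{1,-1}=f_{1,-1}(u)$, $F_{1,0}=f_{1,0}(u)$, $K(u)=\mathrm{diag}(k_{-1}(u),k_0(u),k_1(u))$, and $E(u)$ is the upper unitriangular matrix with above-diagonal entries $E_{-1,0}=e_{-1,0}(u)$, $E_{-1,1}=e_{-1,1}(u)$, $E_{0,1}=e_{01}(u)$ (rows/columns indexed by $-1,0,1$). *)

theory Defs
  imports Main Complex_Main
begin

text \<open>
  Formal power series in u^{-1} with coefficients in a (possibly noncommutative)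
  algebra 'a: a series is represented by its coefficient sequence,
  f n = coefficient of u^{-n}.  Two-variable series with possibly positive powers
  are represented as g m n = coefficient of u^m v^n (m, n integers).
  Indices of End C^3 are the integers -1, 0, 1.
\<close>

type_synonym 'a ser = "nat \<Rightarrow> 'a"
type_synonym 'a ser2 = "int \<Rightarrow> int \<Rightarrow> 'a"

definition idx3 :: "int set" where "idx3 = {-1, 0, 1}"

definition ser_one :: "'a::ring_1 ser" where
  "ser_one = (\<lambda>n. if n = 0 then 1 else 0)"

definition ser_zero :: "'a::ring_1 ser" where
  "ser_zero = (\<lambda>n. 0)"

definition ser_mult :: "'a::ring_1 ser \<Rightarrow> 'a ser \<Rightarrow> 'a ser" (infixl "\<star>" 70) where
  "f \<star> g = (\<lambda>n. \<Sum>k\<le>n. f k * g (n - k))"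

text \<open>Two-sided inverse of a series (exists and is unique when the constant term is 1).\<close>
definition ser_inv :: "'a::ring_1 ser \<Rightarrow> 'a ser" where
  "ser_inv f = (THE g. g \<star> f = ser_one \<and> f \<star> g = ser_one)"

text \<open>Substitution u \<mapsto> u + c in a series in u^{-1}:
  (u+c)^{-r} = \<Sum>_k binom(-r,k) c^k u^{-r-k}.\<close>
definition ser_shift :: "real \<Rightarrow> 'a::real_algebra_1 ser \<Rightarrow> 'a ser" where
  "ser_shift c f = (\<lambda>n. if n = 0 then f 0
      else (\<Sum>r\<in>{1..n}. ((-c) ^ (n - r) * real ((n - 1) choose (n - r))) *\<^sub>R f r))"

text \<open>Divided difference (X(u) - X(v))/(u - v) of a series X, as a series in
  u^{-1}, v^{-1}: coefficient of u^{-p} v^{-q}.  Since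
  (u^{-r} - v^{-r})/(u - v) = - \<Sum>_{a+b=r-1} u^{-b-1} v^{-a-1}, this is -X_{p+q-1}
  for p,q \<ge> 1 and 0 otherwise.\<close>
definition ser_ddiff :: "'a::ring_1 ser \<Rightarrow> nat \<Rightarrow> nat \<Rightarrow> 'a" where
  "ser_ddiff X = (\<lambda>p q. if p = 0 \<or> q = 0 then 0 else - X (p + q - 1))"

definition ser2_embed :: "(nat \<Rightarrow> nat \<Rightarrow> 'a::zero) \<Rightarrow> 'a ser2" where
  "ser2_embed S = (\<lambda>m n. if m \<le> 0 \<and> n \<le> 0 then S (nat (-m)) (nat (-n)) else 0)"

text \<open>Multiplication by (u - v).\<close>
definition ser2_D :: "'a::ab_group_add ser2 \<Rightarrow> 'a ser2" where
  "ser2_D S = (\<lambda>m n. S (m - 1) n - S m (n - 1))"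

text \<open>Action (by multiplication) of the ((a,b),(x,y)) entry of the polynomial matrix
  (u-v)(u-v-1/2) R(u-v) = (u-v)(u-v-1/2) 1 - (u-v-1/2) P + (u-v) Q
  on a two-variable series S.  Here P_{(a,b),(x,y)} = [x=b][y=a] and
  Q_{(a,b),(x,y)} = [b=-a][y=-x].\<close>
definition Rpoly_act :: "int \<Rightarrow> int \<Rightarrow> int \<Rightarrow> int \<Rightarrow> 'a::real_algebra_1 ser2 \<Rightarrow> 'a ser2" where
  "Rpoly_act a b x y S = (\<lambda>m n.
     (if a = x \<and> b = y then ser2_D (ser2_D S) m n - (1/2) *\<^sub>R ser2_D S m n else 0)
   - (if x = b \<and> y = a then ser2_D S m n - (1/2) *\<^sub>R S m n else 0)
   + (if b = - a \<and> y = - x then ser2_D S m n else 0))"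

text \<open>Defining relations of Y_R(so_3) for a family t i j (coefficients t_{ij}^{(r)},
  with t i j 0 = \<delta>_{ij}):
  the RTT relation (multiplied by the scalar polynomial (u-v)(u-v-1/2)), with
  (T_1(u)T_2(v))_{(x,y),(c,d)} = t_{xc}(u) t_{yd}(v) and
  (T_2(v)T_1(u))_{(a,b),(x,y)} = t_{by}(v) t_{ax}(u),
  and the unitarity relations T(u)T^t(u+1/2) = T^t(u+1/2)T(u) = 1 with
  (T^t)_{ab} = t_{-b,-a}.\<close>
definition YR_so3_rel :: "(int \<Rightarrow> int \<Rightarrow> 'a::real_algebra_1 ser) \<Rightarrow> bool" where
  "YR_so3_rel t \<longleftrightarrow>
     (\<forall>i\<in>idx3. \<forall>j\<in>idx3. t i j 0 = (if i = j then 1 else 0)) \<and>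
     (\<forall>a\<in>idx3. \<forall>b\<in>idx3. \<forall>c\<in>idx3. \<forall>d\<in>idx3. \<forall>m n.
        (\<Sum>x\<in>idx3. \<Sum>y\<in>idx3.
           Rpoly_act a b x y (ser2_embed (\<lambda>p q. t x c p * t y d q)) m n)
      = (\<Sum>x\<in>idx3. \<Sum>y\<in>idx3.
           Rpoly_act x y c d (ser2_embed (\<lambda>p q. t b y q * t a x p)) m n)) \<and>
     (\<forall>a\<in>idx3. \<forall>c\<in>idx3. \<forall>n.
        (\<Sum>b\<in>idx3. (t a b \<star> ser_shift (1/2) (t (-c) (-b))) n)
          = (if a = c \<and> n = 0 then 1 else 0)) \<and>
     (\<forall>a\<in>idx3. \<forall>c\<in>idx3. \<forall>n.
        (\<Sum>b\<in>idx3. (ser_shift (1/2) (t (-b) (-a)) \<star> t b c) n)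
          = (if a = c \<and> n = 0 then 1 else 0))"

text \<open>Gauss decomposition T(u) = F(u) K(u) E(u): k l is k_l(u), e i j (i<j) is e_{ij}(u),
  f j i (i<j) is f_{ji}(u).\<close>
definition gauss_F :: "(int \<Rightarrow> int \<Rightarrow> 'a::ring_1 ser) \<Rightarrow> int \<Rightarrow> int \<Rightarrow> 'a ser" where
  "gauss_F f i l = (if i = l then ser_one else if l < i then f i l else ser_zero)"

definition gauss_E :: "(int \<Rightarrow> int \<Rightarrow> 'a::ring_1 ser) \<Rightarrow> int \<Rightarrow> int \<Rightarrow> 'a ser" where
  "gauss_E e l j = (if l = j then ser_one else if l < j then e l j else ser_zero)"

definition is_gauss_decomp ::
  "(int \<Rightarrow> int \<Rightarrow> 'a::ring_1 ser) \<Rightarrow> (int \<Rightarrow> 'a ser) \<Rightarrow> (int \<Rightarrow> int \<Rightarrow> 'a ser)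
     \<Rightarrow> (int \<Rightarrow> int \<Rightarrow> 'a ser) \<Rightarrow> bool" where
  "is_gauss_decomp t k e f \<longleftrightarrow>
     (\<forall>l\<in>idx3. k l 0 = 1) \<and>
     (\<forall>i\<in>idx3. \<forall>j\<in>idx3. i < j \<longrightarrow> e i j 0 = 0 \<and> f j i 0 = 0) \<and>
     (\<forall>i\<in>idx3. \<forall>j\<in>idx3. \<forall>n.
        t i j n = (\<Sum>l\<in>idx3. (gauss_F f i l \<star> k l \<star> gauss_E e l j) n))"

end

theory Submission
  imports Defs "HOL-Computational_Algebra.Formal_Power_Series"
begin

lemma alg1:
  fixes A A' Ai' e e' f f' k' N Z :: "'r::ring_1"
  assumes cN: "\<And>x. x*N = N*x" and cZ: "\<And>x. x*Z = Z*x"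
    and iA': "Ai'*A' = 1" and iA'r: "A'*Ai' = 1"
    and AA: "A*A' = A'*A"
    and H2: "N*(A*(A'*e') - (A'*e')*A) = Z*(A*(A'*e') - A'*(A*e))"
    and H4: "N*(A*(f'*A') - (f'*A')*A) = Z*(f*A*A' - f'*A'*A)"
    and H6: "N*(A*(f'*A'*e'+k') - (f'*A'*e'+k')*A) = Z*(f*A*(A'*e') - f'*A'*(A*e))"
    and Ninj: "\<And>x. N*x = 0 \<Longrightarrow> x = 0"
  shows "N*(A*e' - e'*A) = Z*(A*(e'-e))" and "N*(A*f' - f'*A) = Z*((f-f')*A)"
    and "A*k' = k'*A"
proof -
  have nl: "\<And>a y. a*(N*y) = N*(a*y)" "\<And>a y. a*(Z*y) = Z*(a*y)"
    by (metis cN mult.assoc, metis cZ mult.assoc)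
  have AA2: "\<And>y. A'*(A*y) = A*(A'*y)" by (metis AA mult.assoc)
  have iA2: "\<And>y. Ai'*(A'*y) = y" by (metis iA' mult.assoc mult_1)
  have "A'*(N*(A*e' - e'*A)) = A'*(Z*(A*(e'-e)))"
    using H2 by (simp add: algebra_simps nl AA2 AA)
  hence "Ai'*(A'*(N*(A*e' - e'*A))) = Ai'*(A'*(Z*(A*(e'-e))))" by simp
  thus iii: "N*(A*e' - e'*A) = Z*(A*(e'-e))" by (simp only: iA2)
  have "(N*(A*f' - f'*A))*A' = (Z*((f-f')*A))*A'"
    using H4 by (simp add: algebra_simps nl AA2 AA cN cZ)
  hence "(N*(A*f' - f'*A))*A'*Ai' = (Z*((f-f')*A))*A'*Ai'" by simp
  thus v: "N*(A*f' - f'*A) = Z*((f-f')*A)" using iA'r by (simp add: mult.assoc)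
  have "N*(A*k' - k'*A) = 0"
  proof -
    have "N*(A*(f'*A'*e'+k') - (f'*A'*e'+k')*A) = (N*(A*f' - f'*A))*(A'*e') + f'*(A'*(N*(A*e' - e'*A))) + N*(A*k' - k'*A)"
      by (simp add: algebra_simps nl AA2 AA cN cZ)
    also have "\<dots> = (Z*((f-f')*A))*(A'*e') + f'*(A'*(Z*(A*(e'-e)))) + N*(A*k' - k'*A)"
      by (simp only: iii v)
    finally show ?thesis using H6 by (simp add: algebra_simps nl AA2 AA cN cZ)
  qed
  from Ninj[OF this] show "A*k' = k'*A" by simp
qed

lemma alg2:
  fixes A A' Ai Ai' e e' f f' k k' N Z :: "'r::ring_1"
  assumes cN: "\<And>x. x*N = N*x" and cZ: "\<And>x. x*Z = Z*x"
    and iA: "Ai*A = 1" and iAr: "A*Ai = 1"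
    and iA': "Ai'*A' = 1" and iA'r: "A'*Ai' = 1"
    and AA: "A*A' = A'*A"
    and iii: "N*(A*e' - e'*A) = Z*(A*(e'-e))"
    and H3: "N*(A*e*A' - A'*(A*e)) = Z*(A'*(A*e) - A*(A'*e'))"
    and v: "N*(A*f' - f'*A) = Z*((f-f')*A)"
    and H5: "N*(A*e*(f'*A') - f'*A'*(A*e)) = Z*((f*A*e+k)*A' - (f'*A'*e'+k')*A)"
    and Ak: "A*k' = k'*A" and Ak': "A'*k' = k'*A'"
    and Ninj: "\<And>x. N*x = 0 \<Longrightarrow> x = 0"
  shows "N*(e*f' - f'*e) = Z*(Ai*k - Ai'*k')"
proof -
  have nl0: "\<And>a y. a*(N*y) = N*(a*y)" "\<And>a y. a*(Z*y) = Z*(a*y)"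
    by (metis cN mult.assoc, metis cZ mult.assoc)
  note nl = nl0(1)[of A] nl0(1)[of A'] nl0(1)[of Ai] nl0(1)[of Ai'] nl0(1)[of e] nl0(1)[of e']
     nl0(1)[of f] nl0(1)[of f'] nl0(1)[of k] nl0(1)[of k'] nl0(1)[of Z]
     nl0(2)[of A] nl0(2)[of A'] nl0(2)[of Ai] nl0(2)[of Ai'] nl0(2)[of e] nl0(2)[of e']
     nl0(2)[of f] nl0(2)[of f'] nl0(2)[of k] nl0(2)[of k']
     cN[of A] cN[of A'] cN[of Ai] cN[of Ai'] cN[of e] cN[of e'] cN[of f] cN[of f'] cN[of k] cN[of k'] cN[of Z]
     cZ[of A] cZ[of A'] cZ[of Ai] cZ[of Ai'] cZ[of e] cZ[of e'] cZ[of f] cZ[of f'] cZ[of k] cZ[of k']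
  have AA2: "\<And>y. A'*(A*y) = A*(A'*y)" by (metis AA mult.assoc)
  have iA2: "\<And>y. Ai*(A*y) = y" by (metis iA mult.assoc mult_1)
  have "A*(N*(e*A' - A'*e)) = A*(Z*(A'*(e-e')))"
    using H3 by (simp add: algebra_simps nl AA2 AA)
  hence "Ai*(A*(N*(e*A' - A'*e))) = Ai*(A*(Z*(A'*(e-e'))))" by simp
  hence iv: "N*(e*A' - A'*e) = Z*(A'*(e-e'))" by (simp only: iA2)
  have E1: "N*(A*f') = N*(f'*A) + Z*((f-f')*A)" using v by (simp add: algebra_simps)
  have E2: "N*(e*A') = N*(A'*e) + Z*(A'*(e-e'))" using iv by (simp add: algebra_simps)
  have E3: "N*(e'*A) = N*(A*e') - Z*(A*(e'-e))" using iii by (simp add: algebra_simps)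
  define c where "c = e*f' - f'*e"
  have "N*(N*(A*e*(f'*A') - f'*A'*(A*e))) = N*(N*(A*c*A')) + (N*(A*f'))*(N*(e*A')) - N*(N*(f'*A'*(A*e)))"
    by (simp add: c_def algebra_simps nl)
  also have "\<dots> = N*(N*(A*c*A')) + (N*(f'*A) + Z*((f-f')*A))*(N*(A'*e) + Z*(A'*(e-e'))) - N*(N*(f'*A'*(A*e)))"
    by (simp only: E1 E2)
  finally have L: "N*(N*(A*e*(f'*A') - f'*A'*(A*e))) = N*(N*(A*c*A')) + (N*(f'*A) + Z*((f-f')*A))*(N*(A'*e) + Z*(A'*(e-e'))) - N*(N*(f'*A'*(A*e)))" .
  have "N*(Z*((f*A*e+k)*A' - (f'*A'*e'+k')*A)) = Z*(f*A*(N*(e*A'))) + N*(Z*(k*A')) - Z*(f'*A'*(N*(e'*A))) - N*(Z*(k'*A))"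
    by (simp add: algebra_simps nl)
  also have "\<dots> = Z*(f*A*(N*(A'*e) + Z*(A'*(e-e')))) + N*(Z*(k*A')) - Z*(f'*A'*(N*(A*e') - Z*(A*(e'-e)))) - N*(Z*(k'*A))"
    by (simp only: E2 E3)
  finally have R: "N*(Z*((f*A*e+k)*A' - (f'*A'*e'+k')*A)) = Z*(f*A*(N*(A'*e) + Z*(A'*(e-e')))) + N*(Z*(k*A')) - Z*(f'*A'*(N*(A*e') - Z*(A*(e'-e)))) - N*(Z*(k'*A))" .
  have H5': "N*(N*(A*e*(f'*A') - f'*A'*(A*e))) = N*(Z*((f*A*e+k)*A' - (f'*A'*e'+k')*A))"
    using H5 by simp
  have "N*(N*(A*c*A') - Z*(k*A' - k'*A)) = (N*(N*(A*c*A')) + (N*(f'*A) + Z*((f-f')*A))*(N*(A'*e) + Z*(A'*(e-e'))) - N*(N*(f'*A'*(A*e))))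
      - (Z*(f*A*(N*(A'*e) + Z*(A'*(e-e')))) + N*(Z*(k*A')) - Z*(f'*A'*(N*(A*e') - Z*(A*(e'-e)))) - N*(Z*(k'*A)))"
    by (simp add: algebra_simps nl AA2 AA)
  also have "\<dots> = 0" using H5' L R by simp
  finally have "N*(N*(A*c*A') - Z*(k*A' - k'*A)) = 0" .
  hence K: "N*(A*c*A') = Z*(k*A' - k'*A)" using Ninj by fastforce
  have "N*c = Ai*(N*(A*c*A'))*Ai'"
    by (simp add: nl mult.assoc iA'r iA2)
  also have "\<dots> = Ai*(Z*(k*A' - k'*A))*Ai'" by (simp only: K)
  also have "\<dots> = Z*(Ai*k - Ai*(A*(k'*Ai')))"
  proof -
    have Ak2: "\<And>y. k'*(A*y) = A*(k'*y)" by (metis Ak mult.assoc)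
    show ?thesis by (simp add: algebra_simps nl iA'r Ak2)
  qed
  also have "\<dots> = Z*(Ai*k - Ai'*k')"
  proof -
    have "k'*Ai' = Ai'*k'"
      by (metis Ak' iA' iA'r mult.assoc mult_1 mult.right_neutral)
    thus ?thesis by (simp add: iA2)
  qed
  finally show ?thesis by (simp add: c_def)
qed


notation fps_nth (infixl "\<diamondop>" 75)

definition Fs :: "'a::ring_1 ser \<Rightarrow> 'a fps" where "Fs x = Abs_fps x"

lemma Fs_mult: "Fs (x \<star> y) = Fs x * Fs y"
  by (simp add: Fs_def fps_eq_iff fps_mult_nth ser_mult_def atMost_atLeast0)

lemma Fs_one: "Fs ser_one = 1"
  by (simp add: Fs_def fps_eq_iff ser_one_def)

lemma Fs_zero: "Fs ser_zero = 0"
  by (simp add: Fs_def fps_eq_iff ser_zero_def)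

lemma Fs_inj: "Fs x = Fs y \<Longrightarrow> x = y"
  by (metis Fs_def fps_nth_Abs_fps ext)

lemma Fs_nth[simp]: "Fs x \<diamondop> n = x n" by (simp add: Fs_def)

lemma ser_inv_props:
  fixes x :: "'a::ring_1 ser"
  assumes x0: "x 0 = 1"
  shows "Fs (ser_inv x) * Fs x = 1" "Fs x * Fs (ser_inv x) = 1"
proof -
  define L where "L = fps_left_inverse (Fs x) 1"
  define R where "R = fps_right_inverse (Fs x) 1"
  have L: "L * Fs x = 1" unfolding L_def by (rule fps_left_inverse) (simp add: x0)
  have R: "Fs x * R = 1" unfolding R_def by (rule fps_right_inverse) (simp add: x0)
  have LR: "L = R" by (metis L R mult.assoc mult_1 mult.right_neutral)
  define g where "g = (\<lambda>n. R \<diamondop> n)"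
  have Fg: "Fs g = R" by (simp add: Fs_def g_def fps_nth_inverse)
  have "ser_inv x = g"
    unfolding ser_inv_def
  proof (rule the_equality)
    show "g \<star> x = ser_one \<and> x \<star> g = ser_one"
      using L R LR Fg by (metis Fs_inj Fs_mult Fs_one)
  next
    fix h assume "h \<star> x = ser_one \<and> x \<star> h = ser_one"
    hence "Fs h * Fs x = 1" by (metis Fs_mult Fs_one)
    hence "Fs h = R" by (metis R mult.assoc mult_1 mult.right_neutral)
    thus "h = g" using Fg Fs_inj by metis
  qed
  thus "Fs (ser_inv x) * Fs x = 1" "Fs x * Fs (ser_inv x) = 1"
    using Fg L R LR by auto
qed

definition Uf :: "'a::ring_1 fps \<Rightarrow> 'a fps fps" where
  "Uf s = Abs_fps (\<lambda>p. fps_const (s \<diamondop> p))"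
definition Vf :: "'a::ring_1 fps \<Rightarrow> 'a fps fps" where
  "Vf s = fps_const s"

lemma fps_const_sum: "fps_const (sum g A) = (\<Sum>i\<in>A. fps_const (g i))"
proof (induction A rule: infinite_finite_induct)
  case (insert x F) thus ?case by (simp, metis fps_const_add)
qed auto

lemma Uf_mult: "Uf (a * b) = Uf a * Uf b"
  by (simp add: Uf_def fps_eq_iff fps_mult_nth fps_const_sum)
lemma Uf_add: "Uf (a + b) = Uf a + Uf b"
  by (simp add: Uf_def fps_eq_iff)
lemma Uf_diff: "Uf (a - b) = Uf a - Uf b"
  by (simp add: Uf_def fps_eq_iff)
lemma Uf_one: "Uf 1 = 1"
  by (simp add: Uf_def fps_eq_iff fps_one_nth)
lemma Vf_mult: "Vf (a * b) = Vf a * Vf b"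
  by (simp add: Vf_def)
lemma Vf_add: "Vf (a + b) = Vf a + Vf b"
  by (simp add: Vf_def)
lemma Vf_diff: "Vf (a - b) = Vf a - Vf b"
  by (simp add: Vf_def)
lemma Vf_one: "Vf 1 = 1"
  by (simp add: Vf_def)

lemma UV_nth: "(Uf a * Vf b) \<diamondop> p \<diamondop> q = a \<diamondop> p * b \<diamondop> q"
  by (simp add: Uf_def Vf_def)
lemma VU_nth: "(Vf b * Uf a) \<diamondop> p \<diamondop> q = b \<diamondop> q * a \<diamondop> p"
  by (simp add: Uf_def Vf_def)

definition Nf :: "'a::ring_1 fps fps" where "Nf = fps_const fps_X - fps_X"
definition Zf :: "'a::ring_1 fps fps" where "Zf = fps_X * fps_const fps_X"

lemma Nf_nth: "(Nf * X) \<diamondop> i \<diamondop> j = (if j=0 then 0 else X\<diamondop>i\<diamondop>(j-1)) - (if i=0 then 0 else X\<diamondop>(i-1)\<diamondop>j)"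
  by (simp add: Nf_def left_diff_distrib)

lemma Zf_nth: "(Zf * X) \<diamondop> i \<diamondop> j = (if i=0 \<or> j=0 then 0 else X\<diamondop>(i-1)\<diamondop>(j-1))"
  by (simp add: Zf_def mult.assoc)

lemma Nf_central: "X * Nf = Nf * X"
  by (simp add: fps_eq_iff Nf_def left_diff_distrib right_diff_distrib fps_mult_fps_X_commute)

lemma Zf_central: "X * Zf = Zf * X"
proof -
  have "X * fps_const fps_X = fps_const fps_X * X"
    by (simp add: fps_eq_iff fps_mult_fps_X_commute)
  thus ?thesis by (simp add: Zf_def mult.assoc fps_mult_fps_X_commute) (metis mult.assoc fps_mult_fps_X_commute)
qed

lemma Nf_inj:
  fixes X :: "'a::ring_1 fps fps"
  assumes "Nf * X = 0" shows "X = 0"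
proof -
  have h: "\<And>i j. (if j=0 then 0 else X\<diamondop>i\<diamondop>(j-1)) - (if i=0 then 0 else X\<diamondop>(i-1)\<diamondop>j) = 0"
    using assms by (metis Nf_nth fps_zero_nth)
  have "\<forall>j. X\<diamondop>i\<diamondop>j = 0" for i
  proof (induction i)
    case 0 show ?case
    proof
      fix j show "X \<diamondop> 0 \<diamondop> j = 0" using h[where i=0 and j="Suc j"] by simp
    qed
  next
    case (Suc i) show ?case
    proof
      fix j show "X \<diamondop> Suc i \<diamondop> j = 0" using h[where i="Suc i" and j="Suc j"] Suc by simp
    qed
  qed
  thus ?thesis by (simp add: fps_eq_iff)
qed

definition Abs2 :: "(nat \<Rightarrow> nat \<Rightarrow> 'a::ring_1) \<Rightarrow> 'a fps fps" where
  "Abs2 S = Abs_fps (\<lambda>p. Abs_fps (\<lambda>q. S p q))"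

lemma conv:
  fixes S T :: "nat \<Rightarrow> nat \<Rightarrow> 'a::ring_1"
  assumes rel: "\<And>p q. S (Suc p) q - S p (Suc q) = T p q"
    and S0: "\<And>q. S 0 q = 0" and S0': "\<And>p. S p 0 = 0"
  shows "Nf * Abs2 S = Zf * Abs2 T"
proof (rule fps_ext, rule fps_ext)
  fix i j
  show "(Nf * Abs2 S) \<diamondop> i \<diamondop> j = (Zf * Abs2 T) \<diamondop> i \<diamondop> j"
    unfolding Nf_nth Zf_nth Abs2_def
    using rel[of "i - 1" "j - 1"] S0 S0'
    by (cases i; cases j; simp)
qed

lemma unconv:
  fixes S T :: "nat \<Rightarrow> nat \<Rightarrow> 'a::ring_1"
  assumes "Nf * Abs2 S = Zf * Abs2 T"
  shows "S (Suc p) q - S p (Suc q) = T p q"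
  using arg_cong[OF assms, of "\<lambda>X. X \<diamondop> Suc p \<diamondop> Suc q"]
  unfolding Nf_nth Zf_nth Abs2_def by simp



lemma sum_delta2:
  assumes "a \<in> idx3" "b \<in> idx3"
  shows "(\<Sum>x\<in>idx3. \<Sum>y\<in>idx3. (if a = x \<and> b = y then G x y else 0)) = (G a b :: 'b::comm_monoid_add)"
proof -
  have "(\<Sum>x\<in>idx3. \<Sum>y\<in>idx3. (if a = x \<and> b = y then G x y else 0))
      = (\<Sum>x\<in>idx3. if a = x then (\<Sum>y\<in>idx3. if b = y then G x y else 0) else 0)"
    by (rule sum.cong) auto
  also have "\<dots> = G a b" using assms by (simp add: idx3_def)
  finally show ?thesis .
qed

lemma rtt_sums:
  fixes t :: "int \<Rightarrow> int \<Rightarrow> 'a::real_algebra_1 ser"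
  assumes abcd: "a \<in> idx3" "b \<in> idx3" "c \<in> idx3" "d \<in> idx3" "b \<noteq> -a" "d \<noteq> -c"
  shows "(\<Sum>x\<in>idx3. \<Sum>y\<in>idx3. Rpoly_act a b x y (ser2_embed (\<lambda>p q. t x c p * t y d q)) m n)
    = (ser2_D (ser2_D (ser2_embed (\<lambda>p q. t a c p * t b d q))) m n - (1/2) *\<^sub>R ser2_D (ser2_embed (\<lambda>p q. t a c p * t b d q)) m n)
      - (ser2_D (ser2_embed (\<lambda>p q. t b c p * t a d q)) m n - (1/2) *\<^sub>R (ser2_embed (\<lambda>p q. t b c p * t a d q)) m n)"
    and "(\<Sum>x\<in>idx3. \<Sum>y\<in>idx3. Rpoly_act x y c d (ser2_embed (\<lambda>p q. t b y q * t a x p)) m n)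
    = (ser2_D (ser2_D (ser2_embed (\<lambda>p q. t b d q * t a c p))) m n - (1/2) *\<^sub>R ser2_D (ser2_embed (\<lambda>p q. t b d q * t a c p)) m n)
      - (ser2_D (ser2_embed (\<lambda>p q. t b c q * t a d p)) m n - (1/2) *\<^sub>R (ser2_embed (\<lambda>p q. t b c q * t a d p)) m n)"
proof -
  let ?S = "\<lambda>x y. ser2_embed (\<lambda>p q. t x c p * t y d q)"
  have "(\<Sum>x\<in>idx3. \<Sum>y\<in>idx3. Rpoly_act a b x y (?S x y) m n)
     = (\<Sum>x\<in>idx3. \<Sum>y\<in>idx3. (if a = x \<and> b = y then ser2_D (ser2_D (?S x y)) m n - (1/2) *\<^sub>R ser2_D (?S x y) m n else 0))
     - (\<Sum>x\<in>idx3. \<Sum>y\<in>idx3. (if b = x \<and> a = y then ser2_D (?S x y) m n - (1/2) *\<^sub>R (?S x y) m n else 0))"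
    unfolding Rpoly_act_def using abcd(5)
    by (simp add: sum_subtractf[symmetric] eq_commute[of x b for x] eq_commute[of y a for y] conj_commute)
  also have "\<dots> = (ser2_D (ser2_D (?S a b)) m n - (1/2) *\<^sub>R ser2_D (?S a b) m n) - (ser2_D (?S b a) m n - (1/2) *\<^sub>R (?S b a) m n)"
    using abcd by (simp only: sum_delta2)
  finally show "(\<Sum>x\<in>idx3. \<Sum>y\<in>idx3. Rpoly_act a b x y (ser2_embed (\<lambda>p q. t x c p * t y d q)) m n)
    = (ser2_D (ser2_D (ser2_embed (\<lambda>p q. t a c p * t b d q))) m n - (1/2) *\<^sub>R ser2_D (ser2_embed (\<lambda>p q. t a c p * t b d q)) m n)
      - (ser2_D (ser2_embed (\<lambda>p q. t b c p * t a d q)) m n - (1/2) *\<^sub>R (ser2_embed (\<lambda>p q. t b c p * t a d q)) m n)" .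
  let ?T = "\<lambda>x y. ser2_embed (\<lambda>p q. t b y q * t a x p)"
  have "(\<Sum>x\<in>idx3. \<Sum>y\<in>idx3. Rpoly_act x y c d (?T x y) m n)
     = (\<Sum>x\<in>idx3. \<Sum>y\<in>idx3. (if c = x \<and> d = y then ser2_D (ser2_D (?T x y)) m n - (1/2) *\<^sub>R ser2_D (?T x y) m n else 0))
     - (\<Sum>x\<in>idx3. \<Sum>y\<in>idx3. (if d = x \<and> c = y then ser2_D (?T x y) m n - (1/2) *\<^sub>R (?T x y) m n else 0))"
    unfolding Rpoly_act_def using abcd(6)
    by (simp add: sum_subtractf[symmetric] eq_commute[of x c for x] eq_commute[of y d for y] conj_commute)
  also have "\<dots> = (ser2_D (ser2_D (?T c d)) m n - (1/2) *\<^sub>R ser2_D (?T c d) m n) - (ser2_D (?T d c) m n - (1/2) *\<^sub>R (?T d c) m n)"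
    using abcd by (simp only: sum_delta2)
  finally show "(\<Sum>x\<in>idx3. \<Sum>y\<in>idx3. Rpoly_act x y c d (ser2_embed (\<lambda>p q. t b y q * t a x p)) m n)
    = (ser2_D (ser2_D (ser2_embed (\<lambda>p q. t b d q * t a c p))) m n - (1/2) *\<^sub>R ser2_D (ser2_embed (\<lambda>p q. t b d q * t a c p)) m n)
      - (ser2_D (ser2_embed (\<lambda>p q. t b c q * t a d p)) m n - (1/2) *\<^sub>R (ser2_embed (\<lambda>p q. t b c q * t a d p)) m n)" .
qed

lemma D_half_inj:
  fixes H :: "int \<Rightarrow> int \<Rightarrow> 'a::real_vector"
  assumes rec: "\<And>m n. H (m-1) n - H m (n-1) - (1/2) *\<^sub>R H m n = 0"
    and sup: "\<And>m n. m \<ge> 2 \<Longrightarrow> H m n = 0"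
  shows "H m n = 0"
proof -
  have step: "H (m-1) n = H m (n-1) + (1/2) *\<^sub>R H m n" for m n
    using rec[of m n] by (simp add: algebra_simps)
  have all: "\<forall>n. H (1 - int j) n = 0" for j
  proof (induction j)
    case 0 show ?case using step[of 2] sup by simp
  next
    case (Suc j)
    show ?case
    proof
      fix n
      have "H (1 - int (Suc j)) n = H ((1 - int j) - 1) n" by (simp add: algebra_simps)
      also have "\<dots> = 0" using step[of "1 - int j" n] Suc by simp
      finally show "H (1 - int (Suc j)) n = 0" .
    qed
  qed
  show ?thesis
  proof (cases "m \<ge> 2")
    case True thus ?thesis using sup by simp
  next
    case False
    hence "m = 1 - int (nat (1 - m))" by simp
    thus ?thesis using all by metis
  qed
qed

lemma rtt_coeff:
  fixes t :: "int \<Rightarrow> int \<Rightarrow> 'a::real_algebra_1 ser"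
  assumes rel: "YR_so3_rel t"
    and abcd: "a \<in> idx3" "b \<in> idx3" "c \<in> idx3" "d \<in> idx3" "b \<noteq> -a" "d \<noteq> -c"
  shows "(t a c (Suc p) * t b d q - t b d q * t a c (Suc p)) - (t a c p * t b d (Suc q) - t b d (Suc q) * t a c p)
         = t b c p * t a d q - t b c q * t a d p"
proof -
  define EP where "EP = ser2_embed (\<lambda>p q. t a c p * t b d q)"
  define EP' where "EP' = ser2_embed (\<lambda>p q. t b d q * t a c p)"
  define EQ where "EQ = ser2_embed (\<lambda>p q. t b c p * t a d q)"
  define EQ' where "EQ' = ser2_embed (\<lambda>p q. t b c q * t a d p)"
  have eq: "(ser2_D (ser2_D EP) m n - (1/2) *\<^sub>R ser2_D EP m n) - (ser2_D EQ m n - (1/2) *\<^sub>R EQ m n)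
      = (ser2_D (ser2_D EP') m n - (1/2) *\<^sub>R ser2_D EP' m n) - (ser2_D EQ' m n - (1/2) *\<^sub>R EQ' m n)" for m n
  proof -
    have r: "(\<Sum>x\<in>idx3. \<Sum>y\<in>idx3.
           Rpoly_act a b x y (ser2_embed (\<lambda>p q. t x c p * t y d q)) m n)
      = (\<Sum>x\<in>idx3. \<Sum>y\<in>idx3.
           Rpoly_act x y c d (ser2_embed (\<lambda>p q. t b y q * t a x p)) m n)"
      using rel[unfolded YR_so3_rel_def, THEN conjunct2, THEN conjunct1, rule_format, OF abcd(1-4)] .
    show ?thesis using r unfolding rtt_sums[OF abcd] EP_def EP'_def EQ_def EQ'_def .
  qed
  define H where "H = (\<lambda>m n. ser2_D EP m n - ser2_D EP' m n - EQ m n + EQ' m n)"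
  have H0: "H m n = 0" for m n
  proof (rule D_half_inj[of H])
    fix m n
    show "H (m-1) n - H m (n-1) - (1/2) *\<^sub>R H m n = 0"
      using eq[of m n] unfolding H_def ser2_D_def by (simp add: algebra_simps)
  next
    fix m n :: int assume "2 \<le> m"
    thus "H m n = 0" unfolding H_def ser2_D_def EP_def EP'_def EQ_def EQ'_def ser2_embed_def by simp
  qed
  have "H (- int p) (- int q) = 0" by (rule H0)
  moreover have "nat (1 + int p) = Suc p" "nat (1 + int q) = Suc q" by auto
  ultimately show ?thesis
    unfolding H_def ser2_D_def EP_def EP'_def EQ_def EQ'_def ser2_embed_def
    by (simp add: algebra_simps)
qed



lemma rtt_fps:
  fixes t :: "int \<Rightarrow> int \<Rightarrow> 'a::real_algebra_1 ser"
  assumes rel: "YR_so3_rel t"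
    and abcd: "a \<in> idx3" "b \<in> idx3" "c \<in> idx3" "d \<in> idx3" "b \<noteq> -a" "d \<noteq> -c"
  shows "Nf * (Uf (Fs (t a c)) * Vf (Fs (t b d)) - Vf (Fs (t b d)) * Uf (Fs (t a c)))
       = Zf * (Uf (Fs (t b c)) * Vf (Fs (t a d)) - Vf (Fs (t b c)) * Uf (Fs (t a d)))"
    and "Nf * (Uf (Fs (t b d)) * Vf (Fs (t a c)) - Vf (Fs (t a c)) * Uf (Fs (t b d)))
       = Zf * (Vf (Fs (t b c)) * Uf (Fs (t a d)) - Uf (Fs (t b c)) * Vf (Fs (t a d)))"
proof -
  have t0: "\<And>i j. i \<in> idx3 \<Longrightarrow> j \<in> idx3 \<Longrightarrow> t i j 0 = (if i = j then 1 else 0)"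
    using rel unfolding YR_so3_rel_def by blast
  have r: "\<And>p q. (t a c (Suc p) * t b d q - t b d q * t a c (Suc p)) - (t a c p * t b d (Suc q) - t b d (Suc q) * t a c p)
         = t b c p * t a d q - t b c q * t a d p"
    by (rule rtt_coeff[OF rel abcd])
  have "Nf * Abs2 (\<lambda>p q. t a c p * t b d q - t b d q * t a c p)
      = Zf * Abs2 (\<lambda>p q. t b c p * t a d q - t b c q * t a d p)"
    by (rule conv) (use r t0 abcd in auto)
  moreover have "Abs2 (\<lambda>p q. t a c p * t b d q - t b d q * t a c p) = Uf (Fs (t a c)) * Vf (Fs (t b d)) - Vf (Fs (t b d)) * Uf (Fs (t a c))"
    by (rule fps_ext, rule fps_ext) (simp add: Abs2_def UV_nth VU_nth)
  moreover have "Abs2 (\<lambda>p q. t b c p * t a d q - t b c q * t a d p) = Uf (Fs (t b c)) * Vf (Fs (t a d)) - Vf (Fs (t b c)) * Uf (Fs (t a d))"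
    by (rule fps_ext, rule fps_ext) (simp add: Abs2_def UV_nth VU_nth)
  ultimately show "Nf * (Uf (Fs (t a c)) * Vf (Fs (t b d)) - Vf (Fs (t b d)) * Uf (Fs (t a c)))
       = Zf * (Uf (Fs (t b c)) * Vf (Fs (t a d)) - Vf (Fs (t b c)) * Uf (Fs (t a d)))" by simp
  have "Nf * Abs2 (\<lambda>p q. t b d p * t a c q - t a c q * t b d p)
      = Zf * Abs2 (\<lambda>p q. t b c q * t a d p - t b c p * t a d q)"
  proof (rule conv)
    fix p q
    show "(t b d (Suc p) * t a c q - t a c q * t b d (Suc p)) - (t b d p * t a c (Suc q) - t a c (Suc q) * t b d p)
        = t b c q * t a d p - t b c p * t a d q"
      using r[of q p] by (simp add: algebra_simps)
  qed (use t0 abcd in auto)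
  moreover have "Abs2 (\<lambda>p q. t b d p * t a c q - t a c q * t b d p) = Uf (Fs (t b d)) * Vf (Fs (t a c)) - Vf (Fs (t a c)) * Uf (Fs (t b d))"
    by (rule fps_ext, rule fps_ext) (simp add: Abs2_def UV_nth VU_nth)
  moreover have "Abs2 (\<lambda>p q. t b c q * t a d p - t b c p * t a d q) = Vf (Fs (t b c)) * Uf (Fs (t a d)) - Uf (Fs (t b c)) * Vf (Fs (t a d))"
    by (rule fps_ext, rule fps_ext) (simp add: Abs2_def UV_nth VU_nth)
  ultimately show "Nf * (Uf (Fs (t b d)) * Vf (Fs (t a c)) - Vf (Fs (t a c)) * Uf (Fs (t b d)))
       = Zf * (Vf (Fs (t b c)) * Uf (Fs (t a d)) - Uf (Fs (t b c)) * Vf (Fs (t a d)))" by simp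
qed

lemma gauss_fs:
  assumes g: "is_gauss_decomp t k e f"
  shows "Fs (t (-1) (-1)) = Fs (k (-1))"
    and "Fs (t (-1) 0) = Fs (k (-1)) * Fs (e (-1) 0)"
    and "Fs (t 0 (-1)) = Fs (f 0 (-1)) * Fs (k (-1))"
    and "Fs (t 0 0) = Fs (f 0 (-1)) * Fs (k (-1)) * Fs (e (-1) 0) + Fs (k 0)"
proof -
  have gen: "Fs (t i j) = (\<Sum>l\<in>idx3. Fs (gauss_F f i l) * Fs (k l) * Fs (gauss_E e l j))"
    if "i \<in> idx3" "j \<in> idx3" for i j
  proof (rule fps_ext)
    fix n
    have "t i j n = (\<Sum>l\<in>idx3. (gauss_F f i l \<star> k l \<star> gauss_E e l j) n)"
      using g that unfolding is_gauss_decomp_def by blast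
    thus "Fs (t i j) \<diamondop> n = (\<Sum>l\<in>idx3. Fs (gauss_F f i l) * Fs (k l) * Fs (gauss_E e l j)) \<diamondop> n"
      by (simp add: fps_sum_nth Fs_mult[symmetric])
  qed
  show "Fs (t (-1) (-1)) = Fs (k (-1))"
    using gen[of "-1" "-1"] by (simp add: idx3_def gauss_F_def gauss_E_def Fs_one Fs_zero)
  show "Fs (t (-1) 0) = Fs (k (-1)) * Fs (e (-1) 0)"
    using gen[of "-1" 0] by (simp add: idx3_def gauss_F_def gauss_E_def Fs_one Fs_zero)
  show "Fs (t 0 (-1)) = Fs (f 0 (-1)) * Fs (k (-1))"
    using gen[of 0 "-1"] by (simp add: idx3_def gauss_F_def gauss_E_def Fs_one Fs_zero)
  show "Fs (t 0 0) = Fs (f 0 (-1)) * Fs (k (-1)) * Fs (e (-1) 0) + Fs (k 0)"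
    using gen[of 0 0] by (simp add: idx3_def gauss_F_def gauss_E_def Fs_one Fs_zero)
qed



theorem proposition3p3:
  fixes t :: "int \<Rightarrow> int \<Rightarrow> 'a::real_algebra_1 ser"
    and k :: "int \<Rightarrow> 'a ser"
    and e f :: "int \<Rightarrow> int \<Rightarrow> 'a ser"
  assumes "YR_so3_rel t"
    and "is_gauss_decomp t k e f"
  shows "\<forall>p q. e (-1) 0 p * f 0 (-1) q - f 0 (-1) q * e (-1) 0 p
               = ser_ddiff (ser_inv (k (-1)) \<star> k 0) p q"
proof -
  note rel = assms(1) and g = assms(2)
  have m1: "(-1::int) \<in> idx3" and z: "(0::int) \<in> idx3" by (simp_all add: idx3_def)
  have k10: "k (-1) 0 = 1" using g m1 unfolding is_gauss_decomp_def by blast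
  have e0: "e (-1) 0 0 = 0" and f0: "f 0 (-1) 0 = 0"
    using g m1 z unfolding is_gauss_decomp_def by auto
  define K1 where "K1 = Fs (k (-1))"
  define K0 where "K0 = Fs (k 0)"
  define E where "E = Fs (e (-1) 0)"
  define Fm where "Fm = Fs (f 0 (-1))"
  define KI where "KI = Fs (ser_inv (k (-1)))"
  note gs = gauss_fs[OF g, folded K1_def K0_def E_def Fm_def]
  define A where "A = Uf K1"
  define A' where "A' = Vf K1"
  define Ai where "Ai = Uf KI"
  define Ai' where "Ai' = Vf KI"
  define ee where "ee = Uf E"
  define ee' where "ee' = Vf E"
  define ff where "ff = Uf Fm"
  define ff' where "ff' = Vf Fm"
  define kk where "kk = Uf K0"
  define kk' where "kk' = Vf K0"
  note defs = A_def A'_def ee_def ee'_def ff_def ff'_def kk_def kk'_def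
  note homs = Uf_mult Vf_mult Uf_add Vf_add
  have inv: "KI * K1 = 1" "K1 * KI = 1"
    using ser_inv_props[of "k (-1)", OF k10] unfolding KI_def K1_def by auto
  have iA: "Ai*A = 1" "A*Ai = 1" "Ai'*A' = 1" "A'*Ai' = 1"
    unfolding A_def Ai_def A'_def Ai'_def using inv
    by (simp_all add: Uf_mult[symmetric] Vf_mult[symmetric] Uf_one Vf_one)
  have cN: "\<And>x. x*Nf = Nf*x" by (rule Nf_central)
  have cZ: "\<And>x. x*Zf = Zf*x" by (rule Zf_central)
  have Ninj: "\<And>x::'a fps fps. Nf*x = 0 \<Longrightarrow> x = 0" by (rule Nf_inj)
  have t11: "t (-1) (-1) = k (-1)" using gs(1) unfolding K1_def by (rule Fs_inj)
  have X0: "\<forall>q. k (-1) p * k (-1) q - k (-1) q * k (-1) p = 0" for p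
  proof (induction p)
    case 0 show ?case by (simp add: k10)
  next
    case (Suc p)
    have "k (-1) (Suc p) * k (-1) q - k (-1) q * k (-1) (Suc p) = 0" for q
      using rtt_coeff[OF rel m1 m1 m1 m1, of p q] Suc by (simp add: t11)
    thus ?case by blast
  qed
  have AA: "A*A' = A'*A"
    unfolding A_def A'_def
    by (rule fps_ext, rule fps_ext) (simp add: UV_nth VU_nth K1_def, metis X0 eq_iff_diff_eq_0)
  have H2: "Nf*(A*(A'*ee') - (A'*ee')*A) = Zf*(A*(A'*ee') - A'*(A*ee))"
    using rtt_fps(1)[OF rel m1 m1 m1 z] unfolding defs by (simp add: gs homs)
  have H3: "Nf*(A*ee*A' - A'*(A*ee)) = Zf*(A'*(A*ee) - A*(A'*ee'))"
    using rtt_fps(2)[OF rel m1 m1 m1 z] unfolding defs by (simp add: gs homs)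
  have H4: "Nf*(A*(ff'*A') - (ff'*A')*A) = Zf*(ff*A*A' - ff'*A'*A)"
    using rtt_fps(1)[OF rel m1 z m1 m1] unfolding defs by (simp add: gs homs)
  have H5: "Nf*(A*ee*(ff'*A') - ff'*A'*(A*ee)) = Zf*((ff*A*ee+kk)*A' - (ff'*A'*ee'+kk')*A)"
    using rtt_fps(1)[OF rel m1 z z m1] unfolding defs by (simp add: gs homs)
  have H6: "Nf*(A*(ff'*A'*ee'+kk') - (ff'*A'*ee'+kk')*A) = Zf*(ff*A*(A'*ee') - ff'*A'*(A*ee))"
    using rtt_fps(1)[OF rel m1 z m1 z] unfolding defs by (simp add: gs homs)
  note a1 = alg1[OF cN cZ iA(3) iA(4) AA H2 H4 H6 Ninj]
  have KK: "K1 * K0 = K0 * K1"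
  proof (rule fps_ext)
    fix n
    have c: "K1 \<diamondop> i * K0 \<diamondop> j = K0 \<diamondop> j * K1 \<diamondop> i" for i j
    proof -
      have "(A*kk') \<diamondop> i \<diamondop> j = (kk'*A) \<diamondop> i \<diamondop> j" using a1(3) by simp
      thus ?thesis unfolding A_def kk'_def by (simp add: UV_nth VU_nth)
    qed
    show "(K1 * K0) \<diamondop> n = (K0 * K1) \<diamondop> n"
      unfolding fps_mult_nth using c
      by (subst sum.atLeastAtMost_rev[of _ 0 n, simplified]) (simp add: algebra_simps; rule sum.cong; auto)
  qed
  have Ak': "A'*kk' = kk'*A'" unfolding A'_def kk'_def by (simp add: Vf_mult[symmetric] KK)
  have main: "Nf*(ee*ff' - ff'*ee) = Zf*(Ai*kk - Ai'*kk')"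
    by (rule alg2[OF cN cZ iA AA a1(1) H3 a1(2) H5 a1(3) Ak' Ninj])
  define g where "g = ser_inv (k (-1)) \<star> k 0"
  have G: "Ai*kk = Uf (Fs g)" "Ai'*kk' = Vf (Fs g)"
    unfolding g_def Fs_mult Ai_def kk_def Ai'_def kk'_def KI_def K0_def by (simp_all add: homs)
  have "Nf * Abs2 (\<lambda>p q. e (-1) 0 p * f 0 (-1) q - f 0 (-1) q * e (-1) 0 p)
      = Zf * Abs2 (\<lambda>p q. (if q = 0 then g p else 0) - (if p = 0 then g q else 0))"
  proof -
    have "Abs2 (\<lambda>p q. e (-1) 0 p * f 0 (-1) q - f 0 (-1) q * e (-1) 0 p) = ee*ff' - ff'*ee"
      unfolding ee_def ff'_def E_def Fm_def
      by (rule fps_ext, rule fps_ext) (simp add: Abs2_def UV_nth VU_nth)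
    moreover have "Abs2 (\<lambda>p q. (if q = 0 then g p else 0) - (if p = 0 then g q else 0)) = Uf (Fs g) - Vf (Fs g)"
      by (rule fps_ext, rule fps_ext) (simp add: Abs2_def Uf_def Vf_def)
    ultimately show ?thesis using main G by simp
  qed
  note rec = unconv[OF this]
  have "\<forall>q. e (-1) 0 p * f 0 (-1) q - f 0 (-1) q * e (-1) 0 p = ser_ddiff g p q" for p
  proof (induction p)
    case 0 show ?case by (simp add: e0 ser_ddiff_def)
  next
    case (Suc p)
    show ?case
    proof
      fix q
      show "e (-1) 0 (Suc p) * f 0 (-1) q - f 0 (-1) q * e (-1) 0 (Suc p) = ser_ddiff g (Suc p) q"
      proof (cases q)
        case 0 thus ?thesis by (simp add: f0 ser_ddiff_def)
      next
        case (Suc q')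
        thus ?thesis using rec[of p q] Suc.IH[rule_format, of "Suc q"] e0
          by (auto simp: ser_ddiff_def algebra_simps split: if_splits)
      qed
    qed
  qed
  thus ?thesis unfolding g_def by blast
qed


end
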